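(* Let $G$ be a connected graph of order $n$. Then $\mathrm{sn}(G)=n-1$ if and only if $G=K_n$. Also, $\overline{\mathrm{scs}}(G)=n-1$ if and only if $G=K_n$.
   Context: All graphs are finite and simple. For a graph $G=(V,E)$ and an integer $k\ge\chi(G)$, a proper $k$-colouring is a map $c:V\to[k]=\{1,\dots,k\}$ with $c(u)\neq c(v)$ for every edge $uv$. A set $S\subseteq V$ is a determining set for $(G,c)$ if there is no proper $k$-colouring $c'\neq c$ of $G$ with $c'(s)=c(s)$ for all $s\in S$. A critical set for $(G,c)$ is an inclusion-minimal determining set. $\mathrm{scs}(G,c)$ and $\mathrm{lcs}(G,c)$ denote the size of a smallest resp. largest critical set for $(G,c)$. $\mathrm{sn}(G,k)$ is the minimum of $\mathrm{scs}(G,c)$ over all proper $k$-colourings $c$ (equivalently, the minimum number of vertices coloured in a partial colouring that extends uniquely to a proper $k$-colouring); $\overline{\mathrm{scs}}(G,k)$ is the maximum of $\mathrm{scs}(G,c)$ over all proper $k$-colourings $c$. When $k=\chi(G)$ the second argument is omitted: $\mathrm{sn}(G)=\mathrm{sn}(G,\chi(G))$, $\overline{\mathrm{scs}}(G)=\overline{\mathrm{scs}}(G,\chi(G))$. $K_n$ is the complete graph on $n$ vertices. *)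

theory Defs
  imports Main
begin

definition simple_graph :: "'a set \<Rightarrow> 'a set set \<Rightarrow> bool" where
  "simple_graph V E \<longleftrightarrow> finite V \<and>
     (\<forall>e\<in>E. \<exists>u v. e = {u, v} \<and> u \<noteq> v \<and> u \<in> V \<and> v \<in> V)"

definition adj :: "'a set set \<Rightarrow> 'a \<Rightarrow> 'a \<Rightarrow> bool" where
  "adj E u v \<longleftrightarrow> {u, v} \<in> E"

definition connected_graph :: "'a set \<Rightarrow> 'a set set \<Rightarrow> bool" where
  "connected_graph V E \<longleftrightarrow> V \<noteq> {} \<and>
     (\<forall>u\<in>V. \<forall>v\<in>V. (\<lambda>x y. adj E x y \<and> x \<in> V \<and> y \<in> V)\<^sup>*\<^sup>* u v)"

definition complete_graph :: "'a set \<Rightarrow> 'a set set \<Rightarrow> bool" where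
  "complete_graph V E \<longleftrightarrow> (\<forall>u\<in>V. \<forall>v\<in>V. u \<noteq> v \<longrightarrow> {u, v} \<in> E)"

text \<open>Proper k-colouring c : V \<rightarrow> {1..k}; only values on V matter.\<close>
definition proper_colouring :: "'a set \<Rightarrow> 'a set set \<Rightarrow> nat \<Rightarrow> ('a \<Rightarrow> nat) \<Rightarrow> bool" where
  "proper_colouring V E k c \<longleftrightarrow> (\<forall>v\<in>V. c v \<in> {1..k}) \<and>
     (\<forall>u\<in>V. \<forall>v\<in>V. {u, v} \<in> E \<longrightarrow> c u \<noteq> c v)"

definition chromatic_number :: "'a set \<Rightarrow> 'a set set \<Rightarrow> nat" where
  "chromatic_number V E = (LEAST k. \<exists>c. proper_colouring V E k c)"

definition determining_set :: "'a set \<Rightarrow> 'a set set \<Rightarrow> nat \<Rightarrow> ('a \<Rightarrow> nat) \<Rightarrow> 'a set \<Rightarrow> bool" where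
  "determining_set V E k c S \<longleftrightarrow> S \<subseteq> V \<and>
     \<not> (\<exists>c'. proper_colouring V E k c' \<and> (\<exists>v\<in>V. c' v \<noteq> c v) \<and> (\<forall>s\<in>S. c' s = c s))"

definition critical_set :: "'a set \<Rightarrow> 'a set set \<Rightarrow> nat \<Rightarrow> ('a \<Rightarrow> nat) \<Rightarrow> 'a set \<Rightarrow> bool" where
  "critical_set V E k c S \<longleftrightarrow> determining_set V E k c S \<and>
     (\<forall>T. T \<subset> S \<longrightarrow> \<not> determining_set V E k c T)"

definition scs :: "'a set \<Rightarrow> 'a set set \<Rightarrow> nat \<Rightarrow> ('a \<Rightarrow> nat) \<Rightarrow> nat" where
  "scs V E k c = Min {card S | S. critical_set V E k c S}"

definition sn_k :: "'a set \<Rightarrow> 'a set set \<Rightarrow> nat \<Rightarrow> nat" where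
  "sn_k V E k = Min {scs V E k c | c. proper_colouring V E k c}"

definition scs_bar_k :: "'a set \<Rightarrow> 'a set set \<Rightarrow> nat \<Rightarrow> nat" where
  "scs_bar_k V E k = Max {scs V E k c | c. proper_colouring V E k c}"

definition sn :: "'a set \<Rightarrow> 'a set set \<Rightarrow> nat" where
  "sn V E = sn_k V E (chromatic_number V E)"

definition scs_bar :: "'a set \<Rightarrow> 'a set set \<Rightarrow> nat" where
  "scs_bar V E = scs_bar_k V E (chromatic_number V E)"

end

theory Submission imports Defs begin

lemma edge_distinct: "simple_graph V E \<Longrightarrow> {u,v} \<in> E \<Longrightarrow> u \<noteq> v \<and> u \<in> V \<and> v \<in> V"
proof -
  assume "simple_graph V E" "{u,v} \<in> E"
  then obtain a b where "{u,v} = {a,b}" "a \<noteq> b" "a \<in> V" "b \<in> V"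
    unfolding simple_graph_def by blast
  then show ?thesis by (auto simp: doubleton_eq_iff)
qed

lemma colouring_exists:
  assumes "simple_graph V E" shows "\<exists>c. proper_colouring V E (card V) c"
proof -
  have "finite V" using assms unfolding simple_graph_def by (rule conjunct1)
  then obtain h where h: "bij_betw h V {0..<card V}" using ex_bij_betw_finite_nat by blast
  have inj: "inj_on h V" using h bij_betw_def by blast
  have rng: "\<forall>v\<in>V. h v \<in> {0..<card V}" using bij_betwE[OF h] .
  have p1: "\<forall>v\<in>V. h v + 1 \<in> {1..card V}"
  proof
    fix v assume "v \<in> V" then have "h v \<in> {0..<card V}" using rng by blast
    then show "h v + 1 \<in> {1..card V}" by simp
  qed
  have p2: "\<forall>u\<in>V. \<forall>v\<in>V. {u,v} \<in> E \<longrightarrow> h u + 1 \<noteq> h v + 1"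
  proof (intro ballI impI)
    fix u v assume "u \<in> V" "v \<in> V" "{u,v} \<in> E"
    then have "u \<noteq> v" using edge_distinct[OF assms] by blast
    then have "h u \<noteq> h v" using inj_on_contraD[OF inj] \<open>u \<in> V\<close> \<open>v \<in> V\<close> by blast
    then show "h u + 1 \<noteq> h v + 1" by simp
  qed
  have "proper_colouring V E (card V) (\<lambda>v. h v + 1)"
    unfolding proper_colouring_def using p1 p2 by blast
  then show ?thesis by blast
qed

lemma chi_ex: assumes sg: "simple_graph V E" shows "\<exists>c. proper_colouring V E (chromatic_number V E) c"
  unfolding chromatic_number_def by (rule LeastI_ex) (use colouring_exists[OF sg] in blast)

lemma chi_le: "proper_colouring V E k c \<Longrightarrow> chromatic_number V E \<le> k"
  unfolding chromatic_number_def by (rule Least_le) blast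

lemma bvertex:
  assumes pc: "proper_colouring V E k c" and k: "k = chromatic_number V E" and i: "i \<in> {1..k}"
  shows "\<exists>v\<in>V. c v = i \<and> (\<forall>j\<in>{1..k}. j \<noteq> i \<longrightarrow> (\<exists>w\<in>V. {v,w} \<in> E \<and> c w = j))"
proof (rule ccontr)
  assume H: "\<not> ?thesis"
  have H': "\<exists>j. j\<in>{1..k} \<and> j \<noteq> i \<and> \<not>(\<exists>w\<in>V. {v,w} \<in> E \<and> c w = j)" if "v \<in> V" "c v = i" for v
    using H that by blast
  define m where "m v = (SOME j. j\<in>{1..k} \<and> j \<noteq> i \<and> \<not>(\<exists>w\<in>V. {v,w} \<in> E \<and> c w = j))" for v
  have m: "m v \<in> {1..k} \<and> m v \<noteq> i \<and> \<not>(\<exists>w\<in>V. {v,w} \<in> E \<and> c w = m v)" if "v \<in> V" "c v = i" for v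
    unfolding m_def by (rule someI_ex) (rule H'[OF that])
  define c2 where "c2 v = (if c v = i then m v else c v)" for v
  define f where "f j = (if j = k then i else j)" for j :: nat
  have pc1: "\<forall>v\<in>V. c v \<in> {1..k}" and pc2: "\<forall>u\<in>V. \<forall>v\<in>V. {u, v} \<in> E \<longrightarrow> c u \<noteq> c v"
    using pc unfolding proper_colouring_def by blast+
  have c2r: "c2 v \<in> {1..k} \<and> c2 v \<noteq> i" if "v \<in> V" for v
  proof (cases "c v = i")
    case True then show ?thesis using m[OF that True] unfolding c2_def by simp
  next
    case False then show ?thesis using pc1 that unfolding c2_def by simp
  qed
  have c2e: "c2 u \<noteq> c2 v" if "u \<in> V" "v \<in> V" "{u,v} \<in> E" for u v
  proof -
    have ne: "c u \<noteq> c v" using pc2 that by blast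
    have vu: "{v,u} \<in> E" using that(3) by (simp add: insert_commute)
    show ?thesis
    proof (cases "c u = i")
      case True
      then have "c v \<noteq> i" using ne by simp
      then show ?thesis using m[OF that(1) True] that True unfolding c2_def by auto
    next
      case False
      show ?thesis
      proof (cases "c v = i")
        case True
        then show ?thesis using m[OF that(2) True] that False vu unfolding c2_def by auto
      next
        case F2: False
        then show ?thesis using False ne unfolding c2_def by simp
      qed
    qed
  qed
  have k1: "1 \<le> k" using i by simp
  have q1: "\<forall>v\<in>V. (f \<circ> c2) v \<in> {1..k-1}"
  proof
    fix v assume "v \<in> V"
    then have "c2 v \<in> {1..k}" "c2 v \<noteq> i" using c2r by auto
    then show "(f \<circ> c2) v \<in> {1..k-1}" using i unfolding f_def by auto
  qed
  have q2: "\<forall>u\<in>V. \<forall>v\<in>V. {u, v} \<in> E \<longrightarrow> (f \<circ> c2) u \<noteq> (f \<circ> c2) v"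
  proof (intro ballI impI)
    fix u v assume "u \<in> V" "v \<in> V" "{u, v} \<in> E"
    then have "c2 u \<noteq> c2 v" "c2 u \<noteq> i" "c2 v \<noteq> i" using c2e c2r by auto
    then show "(f \<circ> c2) u \<noteq> (f \<circ> c2) v" unfolding f_def by auto
  qed
  have "proper_colouring V E (k-1) (f \<circ> c2)"
    unfolding proper_colouring_def using q1 q2 by blast
  then have "k \<le> k - 1" using chi_le k by metis
  then show False using k1 by simp
qed

lemma cross: "R\<^sup>*\<^sup>* u v \<Longrightarrow> P u \<Longrightarrow> \<not> P v \<Longrightarrow> \<exists>a b. R a b \<and> P a \<and> \<not> P b"
proof (induction rule: rtranclp_induct)
  case base then show ?case by simp
next
  case (step y z) then show ?case by blast
qed

lemma det_of_pair:
  assumes sg: "simple_graph V E" and pc: "proper_colouring V E k c"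
    and xV: "x \<in> V" and yV: "y \<in> V" and xy: "x \<noteq> y"
    and X: "\<forall>j\<in>{1..k}. j \<noteq> c x \<longrightarrow> (\<exists>w\<in>V. w \<noteq> y \<and> {x,w} \<in> E \<and> c w = j)"
    and Y: "\<forall>j\<in>{1..k}. j \<noteq> c y \<longrightarrow> (\<exists>w\<in>V. {y,w} \<in> E \<and> c w = j)"
  shows "determining_set V E k c (V - {x,y})"
proof -
  have "\<not>(\<exists>c'. proper_colouring V E k c' \<and> (\<exists>v\<in>V. c' v \<noteq> c v) \<and> (\<forall>s\<in>V - {x,y}. c' s = c s))"
  proof
    assume "\<exists>c'. proper_colouring V E k c' \<and> (\<exists>v\<in>V. c' v \<noteq> c v) \<and> (\<forall>s\<in>V - {x,y}. c' s = c s)"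
    then obtain c' where pc': "proper_colouring V E k c'" and d: "\<exists>v\<in>V. c' v \<noteq> c v"
      and ag: "\<forall>s\<in>V - {x,y}. c' s = c s" by blast
    have p1: "\<forall>v\<in>V. c' v \<in> {1..k}" and p2: "\<forall>u\<in>V. \<forall>v\<in>V. {u, v} \<in> E \<longrightarrow> c' u \<noteq> c' v"
      using pc' unfolding proper_colouring_def by blast+
    have cx: "c' x = c x"
    proof (rule ccontr)
      assume ne: "c' x \<noteq> c x"
      have "c' x \<in> {1..k}" using p1 xV by blast
      then obtain w where w: "w \<in> V" "w \<noteq> y" "{x,w} \<in> E" "c w = c' x" using X ne by metis
      have "w \<noteq> x" using edge_distinct[OF sg w(3)] by blast
      then have "c' w = c w" using ag w by blast
      moreover have "c' x \<noteq> c' w" using p2 xV w by blast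
      ultimately show False using w by simp
    qed
    have cy: "c' y = c y"
    proof (rule ccontr)
      assume ne: "c' y \<noteq> c y"
      have "c' y \<in> {1..k}" using p1 yV by blast
      then obtain w where w: "w \<in> V" "{y,w} \<in> E" "c w = c' y" using Y ne by metis
      have "w \<noteq> y" using edge_distinct[OF sg w(2)] by blast
      then have "c' w = c w" using ag w cx by (cases "w = x") auto
      moreover have "c' y \<noteq> c' w" using p2 yV w by blast
      ultimately show False using w by simp
    qed
    have "\<forall>v\<in>V. c' v = c v" using ag cx cy by blast
    then show False using d by blast
  qed
  then show ?thesis unfolding determining_set_def by blast
qed

lemma crit_sub:
  assumes fin: "finite V" and det: "determining_set V E k c S"
  shows "\<exists>T. critical_set V E k c T \<and> card T \<le> card S"
proof -
  define P where "P T \<longleftrightarrow> T \<subseteq> S \<and> determining_set V E k c T" for T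
  have PS: "P S" using det unfolding P_def by blast
  have "\<exists>T. P T \<and> (\<forall>T'. P T' \<longrightarrow> card T \<le> card T')" by (rule ex_has_least_nat) (rule PS)
  then obtain T where T: "P T" and Tmin: "\<forall>T'. P T' \<longrightarrow> card T \<le> card T'" by (elim exE conjE)
  have SV: "S \<subseteq> V" using det unfolding determining_set_def by (elim conjE)
  have TS: "T \<subseteq> S" using T unfolding P_def by simp
  have Td: "determining_set V E k c T" using T unfolding P_def by simp
  have finT: "finite T" using finite_subset[OF TS finite_subset[OF SV fin]] .
  have "\<not> determining_set V E k c T'" if "T' \<subset> T" for T'
  proof
    assume dT': "determining_set V E k c T'"
    have lt: "card T' < card T" using psubset_card_mono[OF finT that] .
    have "T' \<subseteq> S" using that TS by auto
    then have "P T'" using dT' unfolding P_def by simp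
    then have "card T \<le> card T'" using Tmin by simp
    then show False using lt by simp
  qed
  then have "critical_set V E k c T"
    unfolding critical_set_def using Td by blast
  moreover have "card T \<le> card S" using Tmin PS by simp
  ultimately show ?thesis by blast
qed

lemma scs_le:
  assumes fin: "finite V" and crit: "critical_set V E k c T"
  shows "scs V E k c \<le> card T"
proof -
  have "{card S | S. critical_set V E k c S} \<subseteq> {0..card V}"
  proof
    fix x assume "x \<in> {card S | S. critical_set V E k c S}"
    then obtain S where "x = card S" "critical_set V E k c S" by blast
    then have "S \<subseteq> V" unfolding critical_set_def determining_set_def by blast
    then show "x \<in> {0..card V}" using \<open>x = card S\<close> card_mono fin by auto
  qed
  then have "finite {card S | S. critical_set V E k c S}" using finite_subset by blast
  then show ?thesis unfolding scs_def using crit by (intro Min_le) blast+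
qed

lemma noncomplete_det:
  assumes sg: "simple_graph V E" and conn: "connected_graph V E" and nc: "\<not> complete_graph V E"
    and pc: "proper_colouring V E k c" and k: "k = chromatic_number V E"
  shows "\<exists>S. determining_set V E k c S \<and> card S = card V - 2"
proof -
  define bv where "bv v \<longleftrightarrow> (\<forall>j\<in>{1..k}. j \<noteq> c v \<longrightarrow> (\<exists>w\<in>V. {v,w} \<in> E \<and> c w = j))" for v
  have bex: "\<exists>v\<in>V. c v = j \<and> bv v" if "j \<in> {1..k}" for j
    using bvertex[OF pc k that] unfolding bv_def by auto
  have pc1: "\<forall>v\<in>V. c v \<in> {1..k}" and pc2: "\<forall>u\<in>V. \<forall>v\<in>V. {u, v} \<in> E \<longrightarrow> c u \<noteq> c v"
    using pc unfolding proper_colouring_def by blast+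
  have "\<exists>x y. x \<in> V \<and> y \<in> V \<and> x \<noteq> y \<and>
      (\<forall>j\<in>{1..k}. j \<noteq> c x \<longrightarrow> (\<exists>w\<in>V. w \<noteq> y \<and> {x,w} \<in> E \<and> c w = j)) \<and>
      (\<forall>j\<in>{1..k}. j \<noteq> c y \<longrightarrow> (\<exists>w\<in>V. {y,w} \<in> E \<and> c w = j))"
  proof (cases "\<forall>v\<in>V. bv v")
    case True
    from nc obtain u w where uw: "u \<in> V" "w \<in> V" "u \<noteq> w" "{u,w} \<notin> E"
      unfolding complete_graph_def by blast
    have X: "\<forall>j\<in>{1..k}. j \<noteq> c u \<longrightarrow> (\<exists>w'\<in>V. w' \<noteq> w \<and> {u,w'} \<in> E \<and> c w' = j)"
    proof (intro ballI impI)
      fix j assume "j \<in> {1..k}" "j \<noteq> c u"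
      then obtain w' where "w' \<in> V" "{u,w'} \<in> E" "c w' = j" using True uw(1) unfolding bv_def by metis
      moreover then have "w' \<noteq> w" using uw(4) by auto
      ultimately show "\<exists>w'\<in>V. w' \<noteq> w \<and> {u,w'} \<in> E \<and> c w' = j" by blast
    qed
    have Y: "\<forall>j\<in>{1..k}. j \<noteq> c w \<longrightarrow> (\<exists>w'\<in>V. {w,w'} \<in> E \<and> c w' = j)"
      using True uw(2) unfolding bv_def by simp
    show ?thesis using uw X Y by blast
  next
    case False
    then obtain z where z: "z \<in> V" "\<not> bv z" by blast
    obtain b0 where b0: "b0 \<in> V" "bv b0" using bex[of "c z"] pc1 z(1) by blast
    have path: "(\<lambda>x y. adj E x y \<and> x \<in> V \<and> y \<in> V)\<^sup>*\<^sup>* z b0"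
      using conn z(1) b0(1) unfolding connected_graph_def by blast
    obtain a b where ab: "adj E a b \<and> a \<in> V \<and> b \<in> V" "\<not> bv a" "bv b"
      using cross[of "\<lambda>x y. adj E x y \<and> x \<in> V \<and> y \<in> V" z b0 "\<lambda>v. \<not> bv v", OF path] z(2) b0(2)
      by auto
    have aV: "a \<in> V" and bV: "b \<in> V" and eab: "{a,b} \<in> E" using ab(1) unfolding adj_def by auto
    have eba: "{b,a} \<in> E" using eab by (simp add: insert_commute)
    have cab: "c a \<noteq> c b" using pc2 aV bV eab by blast
    obtain bj where bj: "bj \<in> V" "c bj = c a" "bv bj" using bex[of "c a"] pc1 aV by blast
    have bjb: "bj \<noteq> b" using bj(2) cab by auto
    have bja: "bj \<noteq> a" using bj(3) ab(2) by auto
    show ?thesis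
    proof (cases "{b,bj} \<in> E")
      case True
      have X: "\<forall>j\<in>{1..k}. j \<noteq> c b \<longrightarrow> (\<exists>w\<in>V. w \<noteq> bj \<and> {b,w} \<in> E \<and> c w = j)"
      proof (intro ballI impI)
        fix j assume j: "j \<in> {1..k}" "j \<noteq> c b"
        show "\<exists>w\<in>V. w \<noteq> bj \<and> {b,w} \<in> E \<and> c w = j"
        proof (cases "j = c a")
          case True
          then show ?thesis using aV bja eba by auto
        next
          case False
          obtain w where "w \<in> V" "{b,w} \<in> E" "c w = j" using ab(3) j unfolding bv_def by metis
          moreover then have "w \<noteq> bj" using False bj(2) by auto
          ultimately show ?thesis by blast
        qed
      qed
      have Y: "\<forall>j\<in>{1..k}. j \<noteq> c bj \<longrightarrow> (\<exists>w\<in>V. {bj,w} \<in> E \<and> c w = j)"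
        using bj(3) unfolding bv_def by simp
      show ?thesis using bV bj(1) bjb X Y by blast
    next
      case False
      have X: "\<forall>j\<in>{1..k}. j \<noteq> c bj \<longrightarrow> (\<exists>w\<in>V. w \<noteq> b \<and> {bj,w} \<in> E \<and> c w = j)"
      proof (intro ballI impI)
        fix j assume j: "j \<in> {1..k}" "j \<noteq> c bj"
        obtain w where "w \<in> V" "{bj,w} \<in> E" "c w = j" using bj(3) j unfolding bv_def by metis
        moreover then have "w \<noteq> b" using False by (auto simp: insert_commute)
        ultimately show "\<exists>w\<in>V. w \<noteq> b \<and> {bj,w} \<in> E \<and> c w = j" by blast
      qed
      have Y: "\<forall>j\<in>{1..k}. j \<noteq> c b \<longrightarrow> (\<exists>w\<in>V. {b,w} \<in> E \<and> c w = j)"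
        using ab(3) unfolding bv_def by simp
      show ?thesis using bV bj(1) bjb X Y by blast
    qed
  qed
  then obtain x y where xy: "x \<in> V" "y \<in> V" "x \<noteq> y"
    and X: "\<forall>j\<in>{1..k}. j \<noteq> c x \<longrightarrow> (\<exists>w\<in>V. w \<noteq> y \<and> {x,w} \<in> E \<and> c w = j)"
    and Y: "\<forall>j\<in>{1..k}. j \<noteq> c y \<longrightarrow> (\<exists>w\<in>V. {y,w} \<in> E \<and> c w = j)" by blast
  have det: "determining_set V E k c (V - {x,y})"
    using det_of_pair[OF sg pc xy X Y] .
  have fin: "finite V" using sg unfolding simple_graph_def by simp
  have sub: "{x,y} \<subseteq> V" using xy by simp
  have "card (V - {x,y}) = card V - card {x,y}" using card_Diff_subset[OF _ sub] by simp
  also have "card {x,y} = 2" using xy(3) by simp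
  finally show ?thesis using det by blast
qed

lemma complete_inj:
  assumes cg: "complete_graph V E" and pc: "proper_colouring V E k c"
  shows "inj_on c V"
proof (rule inj_onI)
  fix u v assume "u \<in> V" "v \<in> V" "c u = c v"
  show "u = v"
  proof (rule ccontr)
    assume "u \<noteq> v"
    then have "{u,v} \<in> E" using cg \<open>u \<in> V\<close> \<open>v \<in> V\<close> unfolding complete_graph_def by blast
    then have "c u \<noteq> c v" using pc \<open>u \<in> V\<close> \<open>v \<in> V\<close> unfolding proper_colouring_def by blast
    then show False using \<open>c u = c v\<close> by simp
  qed
qed

lemma complete_card_le:
  assumes cg: "complete_graph V E" and pc: "proper_colouring V E k c"
  shows "card V \<le> k"
proof -
  have "card V = card (c ` V)" using card_image[OF complete_inj[OF cg pc]] by simp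
  moreover have "c ` V \<subseteq> {1..k}" using pc unfolding proper_colouring_def by auto
  then have "card (c ` V) \<le> card {1..k}" by (intro card_mono) auto
  ultimately show ?thesis by simp
qed

lemma complete_chi:
  assumes sg: "simple_graph V E" and cg: "complete_graph V E"
  shows "chromatic_number V E = card V"
proof -
  obtain c where "proper_colouring V E (chromatic_number V E) c" using chi_ex[OF sg] by blast
  then have "card V \<le> chromatic_number V E" using complete_card_le[OF cg] by blast
  moreover obtain c' where "proper_colouring V E (card V) c'" using colouring_exists[OF sg] by blast
  then have "chromatic_number V E \<le> card V" by (rule chi_le)
  ultimately show ?thesis by simp
qed

lemma complete_image:
  assumes sg: "simple_graph V E" and cg: "complete_graph V E" and pc: "proper_colouring V E (card V) c"
  shows "c ` V = {1..card V}"
proof -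
  have fin: "finite V" using sg unfolding simple_graph_def by simp
  have sub: "c ` V \<subseteq> {1..card V}" using pc unfolding proper_colouring_def by auto
  have "card (c ` V) = card V" using card_image[OF complete_inj[OF cg pc]] by simp
  then have "card (c ` V) = card {1..card V}" by simp
  then show ?thesis using card_subset_eq[OF _ sub] by simp
qed

lemma complete_det:
  assumes sg: "simple_graph V E" and cg: "complete_graph V E" and pc: "proper_colouring V E (card V) c"
    and SV: "S \<subseteq> V"
  shows "determining_set V E (card V) c S \<longleftrightarrow> card (V - S) \<le> 1"
proof -
  have fin: "finite V" using sg unfolding simple_graph_def by simp
  have finD: "finite (V - S)" using fin by simp
  have inj: "inj_on c V" using complete_inj[OF cg pc] .
  have img: "c ` V = {1..card V}" using complete_image[OF sg cg pc] .
  show ?thesis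
  proof
    assume det: "determining_set V E (card V) c S"
    show "card (V - S) \<le> 1"
    proof (rule ccontr)
      assume "\<not> card (V - S) \<le> 1"
      then have "\<not> (\<forall>a\<in>V - S. \<forall>b\<in>V - S. a = b)" using card_le_Suc0_iff_eq[OF finD] by simp
      then obtain x y where xy: "x \<in> V" "y \<in> V" "x \<notin> S" "y \<notin> S" "x \<noteq> y" by blast
      define c' where "c' v = (if v = x then c y else if v = y then c x else c v)" for v
      have cxy: "c x \<noteq> c y" using inj xy inj_on_contraD by metis
      have r: "\<forall>v\<in>V. c' v \<in> {1..card V}"
        using pc xy(1,2) unfolding proper_colouring_def c'_def by auto
      have injc': "inj_on c' V"
        unfolding inj_on_def c'_def using inj xy(1,2) unfolding inj_on_def by auto
      have e: "\<forall>u\<in>V. \<forall>v\<in>V. {u, v} \<in> E \<longrightarrow> c' u \<noteq> c' v"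
      proof (intro ballI impI)
        fix u v assume "u \<in> V" "v \<in> V" "{u,v} \<in> E"
        then have "u \<noteq> v" using edge_distinct[OF sg] by blast
        then show "c' u \<noteq> c' v" using injc' \<open>u \<in> V\<close> \<open>v \<in> V\<close> inj_on_contraD by metis
      qed
      have pc': "proper_colouring V E (card V) c'" unfolding proper_colouring_def using r e by blast
      have d: "c' x \<noteq> c x" using cxy unfolding c'_def by simp
      have ag: "\<forall>s\<in>S. c' s = c s" using xy(3,4) unfolding c'_def by auto
      show False using det pc' d ag xy(1) unfolding determining_set_def by blast
    qed
  next
    assume le: "card (V - S) \<le> 1"
    then have one: "\<forall>a\<in>V - S. \<forall>b\<in>V - S. a = b" using card_le_Suc0_iff_eq[OF finD] by simp
    have "\<not> (\<exists>c'. proper_colouring V E (card V) c' \<and> (\<exists>v\<in>V. c' v \<noteq> c v) \<and> (\<forall>s\<in>S. c' s = c s))"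
    proof
      assume "\<exists>c'. proper_colouring V E (card V) c' \<and> (\<exists>v\<in>V. c' v \<noteq> c v) \<and> (\<forall>s\<in>S. c' s = c s)"
      then obtain c' v where pc': "proper_colouring V E (card V) c'" and v: "v \<in> V" "c' v \<noteq> c v"
        and ag: "\<forall>s\<in>S. c' s = c s" by blast
      have vS: "v \<notin> S" using ag v by auto
      have "c' v \<in> {1..card V}" using pc' v(1) unfolding proper_colouring_def by blast
      then have "c' v \<in> c ` V" using img by simp
      then obtain u where u: "u \<in> V" "c u = c' v" by auto
      have uv: "u \<noteq> v" using u v by auto
      have uS: "u \<in> S" using one u(1) v(1) vS uv by blast
      have "{u,v} \<in> E" using cg u(1) v(1) uv unfolding complete_graph_def by blast
      then have "c' u \<noteq> c' v" using pc' u(1) v(1) unfolding proper_colouring_def by blast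
      then show False using ag uS u(2) by simp
    qed
    then show "determining_set V E (card V) c S" unfolding determining_set_def using SV by blast
  qed
qed

lemma complete_crit_card:
  assumes sg: "simple_graph V E" and cg: "complete_graph V E" and pc: "proper_colouring V E (card V) c"
    and cr: "critical_set V E (card V) c S"
  shows "card S = card V - 1"
proof -
  have fin: "finite V" using sg unfolding simple_graph_def by simp
  have det: "determining_set V E (card V) c S" using cr unfolding critical_set_def by blast
  have SV: "S \<subseteq> V" using det unfolding determining_set_def by blast
  have le: "card (V - S) \<le> 1" using complete_det[OF sg cg pc SV] det by blast
  show ?thesis
  proof (cases "V = {}")
    case True then show ?thesis using SV by auto
  next
    case Vne: False
  have "V - S \<noteq> {}"
  proof
    assume "V - S = {}"
    then have SeqV: "S = V" using SV by blast
    obtain v where v: "v \<in> V" using Vne by blast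
    have sub: "V - {v} \<subset> S" using SeqV v by blast
    have "V - (V - {v}) = {v}" using v by blast
    then have "card (V - (V - {v})) \<le> 1" by simp
    then have "determining_set V E (card V) c (V - {v})"
      using complete_det[OF sg cg pc, of "V - {v}"] by blast
    then show False using cr sub unfolding critical_set_def by blast
  qed
  then have "card (V - S) \<noteq> 0" using fin by simp
  then have "card (V - S) = 1" using le by simp
  moreover have "card (V - S) = card V - card S" using card_Diff_subset[OF finite_subset[OF SV fin] SV] .
  moreover have "card S \<le> card V" using card_mono[OF fin SV] .
  ultimately show ?thesis by simp
  qed
qed

lemma complete_scs:
  assumes sg: "simple_graph V E" and cg: "complete_graph V E" and pc: "proper_colouring V E (card V) c"
    and Vne: "V \<noteq> {}"
  shows "scs V E (card V) c = card V - 1"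
proof -
  have fin: "finite V" using sg unfolding simple_graph_def by simp
  obtain v where v: "v \<in> V" using Vne by blast
  have sub: "V - {v} \<subseteq> V" by blast
  have "V - (V - {v}) = {v}" using v by blast
  then have "card (V - (V - {v})) \<le> 1" by simp
  then have det: "determining_set V E (card V) c (V - {v})"
    using complete_det[OF sg cg pc sub] by blast
  obtain T where T: "critical_set V E (card V) c T" using crit_sub[OF fin det] by blast
  have cT: "card T = card V - 1" using complete_crit_card[OF sg cg pc T] .
  have "{card S | S. critical_set V E (card V) c S} = {card V - 1}"
  proof (rule set_eqI)
    fix x show "x \<in> {card S | S. critical_set V E (card V) c S} \<longleftrightarrow> x \<in> {card V - 1}"
      using complete_crit_card[OF sg cg pc] T cT by (auto intro!: exI[of _ T])
  qed
  then show ?thesis unfolding scs_def by simp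
qed

theorem theorem2:
  fixes V :: "'a set" and E :: "'a set set" and n :: nat
  assumes "simple_graph V E"
    and "connected_graph V E"
    and "n = card V"
  shows "(sn V E = n - 1 \<longleftrightarrow> complete_graph V E) \<and>
         (scs_bar V E = n - 1 \<longleftrightarrow> complete_graph V E)"
proof -
  note sg = assms(1) and conn = assms(2) and nV = assms(3)
  have fin: "finite V" using sg unfolding simple_graph_def by simp
  have Vne: "V \<noteq> {}" using conn unfolding connected_graph_def by simp
  define A where "A = {scs V E (chromatic_number V E) c | c. proper_colouring V E (chromatic_number V E) c}"
  have snA: "sn V E = Min A" unfolding sn_def sn_k_def A_def by simp
  have sbA: "scs_bar V E = Max A" unfolding scs_bar_def scs_bar_k_def A_def by simp
  obtain c0 where c0: "proper_colouring V E (chromatic_number V E) c0" using chi_ex[OF sg] by blast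
  have Ane: "A \<noteq> {}" using c0 unfolding A_def by blast
  show ?thesis
  proof (cases "complete_graph V E")
    case True
    have chi: "chromatic_number V E = card V" using complete_chi[OF sg True] .
    have "A = {n - 1}"
    proof (rule set_eqI)
      fix x
      have "x \<in> A \<longleftrightarrow> (\<exists>c. x = scs V E (card V) c \<and> proper_colouring V E (card V) c)"
        unfolding A_def chi by blast
      also have "\<dots> \<longleftrightarrow> x = n - 1"
        using complete_scs[OF sg True _ Vne] c0 chi nV by (auto intro!: exI[of _ c0])
      finally show "x \<in> A \<longleftrightarrow> x \<in> {n - 1}" by simp
    qed
    then show ?thesis using snA sbA True by simp
  next
    case False
    have bound: "x \<le> n - 2" if xA: "x \<in> A" for x
    proof -
      obtain c where x: "x = scs V E (chromatic_number V E) c"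
        and pc: "proper_colouring V E (chromatic_number V E) c" using xA unfolding A_def by blast
      obtain S where S: "determining_set V E (chromatic_number V E) c S" "card S = card V - 2"
        using noncomplete_det[OF sg conn False pc refl] by blast
      obtain T where T: "critical_set V E (chromatic_number V E) c T" "card T \<le> card S"
        using crit_sub[OF fin S(1)] by blast
      have "x \<le> card T" using scs_le[OF fin T(1)] x by simp
      then show ?thesis using T(2) S(2) nV by simp
    qed
    have "A \<subseteq> {0..n-2}" using bound by auto
    then have finA: "finite A" using finite_subset by blast
    from False obtain u w where uw: "u \<in> V" "w \<in> V" "u \<noteq> w"
      unfolding complete_graph_def by blast
    have "{u,w} \<subseteq> V" using uw by simp
    then have "card {u,w} \<le> card V" using card_mono[OF fin] by blast
    then have n2: "2 \<le> n" using uw(3) nV by simp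
    have "Max A \<in> A" using Max_in[OF finA Ane] .
    then have m1: "Max A \<le> n - 2" using bound by blast
    have "Min A \<in> A" using Min_in[OF finA Ane] .
    then have m2: "Min A \<le> n - 2" using bound by blast
    have lt: "n - 2 < n - 1" using n2 by linarith
    have "Min A \<noteq> n - 1" "Max A \<noteq> n - 1" using m1 m2 lt by linarith+
    then show ?thesis using snA sbA False by simp
  qed
qed

end
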